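(* Let $m,n\ge 1$ and let $D,E$ be linear subspaces of $M_{m\times n}$ such that $\sigma(D,E)=\operatorname{conv}(\Phi_D\cup\Phi^E)$ is a proper face of the cone $\mathbb{D}$ of decomposable maps, and such that every interior point of $\sigma(D,E)$ is an interior point of the cone $\mathbb{P}_1$ of positive linear maps $M_m\to M_n$. Then every nonzero element $A$ of $$\sigma(D,E)'=\{A\in\mathbb{T}:\ \langle A,\phi\rangle=0 \text{ for every }\phi\in\sigma(D,E)\}$$ belongs to $\mathbb{T}\setminus\mathbb{V}_1$.
   Context: $M_k$ denotes complex $k\times k$ matrices and $M_{m\times n}$ complex $m\times n$ matrices; $X^{\mathrm t}$ is the transpose. A linear map $\phi:M_m\to M_n$ is positive if it maps positive semi-definite matrices to positive semi-definite matrices; $\mathbb{P}_1$ is the cone of positive maps. For a finite set $\mathcal V=\{V_1,\dots,V_\nu\}\subset M_{m\times n}$ put $\phi_{\mathcal V}(X)=\sum_i V_i^*XV_i$ and $\phi^{\mathcal V}(X)=\sum_i V_i^*X^{\mathrm t}V_i$. The cone of decomposable maps is $\mathbb{D}=\{\phi_{\mathcal V}+\phi^{\mathcal W}\}$ (over all finite $\mathcal V,\mathcal W\subset M_{m\times n}$). For a subspace $D\subset M_{m\times n}$, $\Phi_D=\{\phi_{\mathcal V}:\operatorname{span}\mathcal V\subset D\}$ and $\Phi^E=\{\phi^{\mathcal V}:\operatorname{span}\mathcal V\subset E\}$. A point $x$ of a convex set $C$ is an interior point of $C$ if for every $y\in C$ there is $t>1$ with $(1-t)y+tx\in C$. Identify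 $M_n\otimes M_m$ with $m\times m$ block matrices $A=\sum_{i,j=1}^m a_{ij}\otimes e_{ij}$ with blocks $a_{ij}\in M_n$; the partial transpose is $A^\tau=\sum_{i,j}a_{ji}\otimes e_{ij}$. $\mathbb{T}$ is the cone of $A\in M_n\otimes M_m$ with both $A$ and $A^\tau$ positive semi-definite. For $z\in M_{m\times n}$ with rows $z_1,\dots,z_m\in\mathbb C^n$ (as column vectors), $\tilde z\tilde z^*$ is the block matrix whose $(i,j)$ block is $z_iz_j^*$; $\mathbb{V}_1$ is the convex cone generated by $\{\tilde z\tilde z^*: \operatorname{rank} z\le 1\}$ (the separable cone). The bilinear pairing is $\langle A,\phi\rangle=\sum_{i,j=1}^m\operatorname{Tr}\big(a_{ij}\,\phi(e_{ij})^{\mathrm t}\big)$ for $A=\sum a_{ij}\otimes e_{ij}$ and $\phi:M_m\to M_n$ linear, where $e_{ij}$ are the matrix units of $M_m$. *)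

theory Defs
  imports "HOL-Analysis.Analysis"
begin

text \<open>The sizes m and n are encoded by finite index types 'm and 'n
 (so m, n \<ge> 1 automatically). M_k = complex^'k^'k, M_{m x n} = complex^'n^'m
 (m rows, n columns). M_n \<otimes> M_m is represented by
 complex^('m::finite \<times> 'n::finite)^('m::finite \<times> 'n::finite), the entry at ((i,k),(j,l)) being the (k,l) entry
 of the block a_ij.\<close>

definition cadj :: "complex^'b^'a \<Rightarrow> complex^'a^'b" where
  "cadj V = (\<chi> i j. cnj (V $ j $ i))"

definition cscale :: "complex \<Rightarrow> complex^'b^'a \<Rightarrow> complex^'b^'a" where
  "cscale c X = (\<chi> i j. c * X $ i $ j)"

definition psd :: "complex^'k^'k \<Rightarrow> bool" where
  "psd A \<longleftrightarrow> (\<forall>x::complex^'k.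
      Im (\<Sum>i\<in>UNIV. cnj (x $ i) * (A *v x) $ i) = 0 \<and>
      Re (\<Sum>i\<in>UNIV. cnj (x $ i) * (A *v x) $ i) \<ge> 0)"

definition clinear_map :: "(complex^'m^'m \<Rightarrow> complex^'n^'n) \<Rightarrow> bool" where
  "clinear_map \<phi> \<longleftrightarrow> (\<forall>X Y. \<phi> (X + Y) = \<phi> X + \<phi> Y) \<and> (\<forall>c X. \<phi> (cscale c X) = cscale c (\<phi> X))"

definition P1 :: "(complex^'m^'m \<Rightarrow> complex^'n^'n) set" where
  "P1 = {\<phi>. clinear_map \<phi> \<and> (\<forall>X. psd X \<longrightarrow> psd (\<phi> X))}"

definition phi_low :: "(complex^'n^'m) list \<Rightarrow> complex^'m^'m \<Rightarrow> complex^'n^'n" where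
  "phi_low Vs X = sum_list (map (\<lambda>V. cadj V ** X ** V) Vs)"

definition phi_up :: "(complex^'n^'m) list \<Rightarrow> complex^'m^'m \<Rightarrow> complex^'n^'n" where
  "phi_up Vs X = sum_list (map (\<lambda>V. cadj V ** transpose X ** V) Vs)"

definition Dcone :: "(complex^'m^'m \<Rightarrow> complex^'n^'n) set" where
  "Dcone = {\<phi>. \<exists>Vs Ws. \<phi> = (\<lambda>X. phi_low Vs X + phi_up Ws X)}"

definition csubspace :: "(complex^'b^'a) set \<Rightarrow> bool" where
  "csubspace D \<longleftrightarrow> 0 \<in> D \<and> (\<forall>x\<in>D. \<forall>y\<in>D. x + y \<in> D) \<and> (\<forall>c. \<forall>x\<in>D. cscale c x \<in> D)"

definition cspan :: "(complex^'b^'a) set \<Rightarrow> (complex^'b^'a) set" where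
  "cspan S = \<Inter>{D. csubspace D \<and> S \<subseteq> D}"

definition PhiD :: "(complex^'n^'m) set \<Rightarrow> (complex^'m^'m \<Rightarrow> complex^'n^'n) set" where
  "PhiD D = {phi_low Vs | Vs. cspan (set Vs) \<subseteq> D}"

definition PhiE :: "(complex^'n^'m) set \<Rightarrow> (complex^'m^'m \<Rightarrow> complex^'n^'n) set" where
  "PhiE E = {phi_up Vs | Vs. cspan (set Vs) \<subseteq> E}"

definition fcomb :: "real \<Rightarrow> ('a \<Rightarrow> 'b::real_vector) \<Rightarrow> ('a \<Rightarrow> 'b) \<Rightarrow> 'a \<Rightarrow> 'b" where
  "fcomb t y x = (\<lambda>X. (1 - t) *\<^sub>R y X + t *\<^sub>R x X)"

definition fconv :: "('a \<Rightarrow> 'b::real_vector) set \<Rightarrow> ('a \<Rightarrow> 'b) set" where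
  "fconv S = {\<phi>. \<exists>k (c::nat \<Rightarrow> real) f. (\<forall>i<k. c i \<ge> 0 \<and> f i \<in> S) \<and> (\<Sum>i<k. c i) = 1 \<and>
                 \<phi> = (\<lambda>X. \<Sum>i<k. c i *\<^sub>R f i X)}"

definition fconvex :: "('a \<Rightarrow> 'b::real_vector) set \<Rightarrow> bool" where
  "fconvex S \<longleftrightarrow> (\<forall>a\<in>S. \<forall>b\<in>S. \<forall>u::real. 0 \<le> u \<and> u \<le> 1 \<longrightarrow> fcomb u a b \<in> S)"

definition fface_of :: "('a \<Rightarrow> 'b::real_vector) set \<Rightarrow> ('a \<Rightarrow> 'b) set \<Rightarrow> bool" where
  "fface_of F C \<longleftrightarrow> F \<subseteq> C \<and> fconvex F \<and>
     (\<forall>a\<in>C. \<forall>b\<in>C. \<forall>x\<in>F. \<forall>u::real. 0 < u \<and> u < 1 \<and> a \<noteq> b \<and> x = fcomb u a b \<longrightarrow> a \<in> F \<and> b \<in> F)"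

definition proper_fface_of :: "('a \<Rightarrow> 'b::real_vector) set \<Rightarrow> ('a \<Rightarrow> 'b) set \<Rightarrow> bool" where
  "proper_fface_of F C \<longleftrightarrow> fface_of F C \<and> F \<noteq> C"

definition interior_pt :: "('a \<Rightarrow> 'b::real_vector) set \<Rightarrow> ('a \<Rightarrow> 'b) \<Rightarrow> bool" where
  "interior_pt C x \<longleftrightarrow> x \<in> C \<and> (\<forall>y\<in>C. \<exists>t>1. fcomb t y x \<in> C)"

definition sigma :: "(complex^'n^'m) set \<Rightarrow> (complex^'n^'m) set \<Rightarrow> (complex^'m^'m \<Rightarrow> complex^'n^'n) set" where
  "sigma D E = fconv (PhiD D \<union> PhiE E)"

definition blk :: "complex^('m::finite \<times> 'n::finite)^('m::finite \<times> 'n::finite) \<Rightarrow> 'm \<Rightarrow> 'm \<Rightarrow> complex^'n^'n" where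
  "blk A i j = (\<chi> k l. A $ (i,k) $ (j,l))"

definition ptrans :: "complex^('m::finite \<times> 'n::finite)^('m::finite \<times> 'n::finite) \<Rightarrow> complex^('m::finite \<times> 'n::finite)^('m::finite \<times> 'n::finite)" where
  "ptrans A = (\<chi> p q. A $ (fst q, snd p) $ (fst p, snd q))"

definition Tcone :: "(complex^('m::finite \<times> 'n::finite)^('m::finite \<times> 'n::finite)) set" where
  "Tcone = {A. psd A \<and> psd (ptrans A)}"

definition zz :: "complex^'n^'m \<Rightarrow> complex^('m::finite \<times> 'n::finite)^('m::finite \<times> 'n::finite)" where
  "zz z = (\<chi> p q. z $ fst p $ snd p * cnj (z $ fst q $ snd q))"

definition V1 :: "(complex^('m::finite \<times> 'n::finite)^('m::finite \<times> 'n::finite)) set" where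
  "V1 = {A. \<exists>k (c::nat \<Rightarrow> real) z. (\<forall>i<k. c i \<ge> 0 \<and> rank (z i :: complex^'n^'m) \<le> 1) \<and>
              A = (\<Sum>i<k. c i *\<^sub>R zz (z i))}"

definition unitmat :: "'m \<Rightarrow> 'm \<Rightarrow> complex^'m^'m" where
  "unitmat i j = (\<chi> a b. if a = i \<and> b = j then 1 else 0)"

definition pairing :: "complex^('m::finite \<times> 'n::finite)^('m::finite \<times> 'n::finite) \<Rightarrow> (complex^'m^'m \<Rightarrow> complex^'n^'n) \<Rightarrow> complex" where
  "pairing A \<phi> = (\<Sum>i\<in>UNIV. \<Sum>j\<in>UNIV. trace (blk A i j ** transpose (\<phi> (unitmat i j))))"

definition sigma_dual :: "(complex^'n^'m) set \<Rightarrow> (complex^'n^'m) set \<Rightarrow> (complex^('m::finite \<times> 'n::finite)^('m::finite \<times> 'n::finite)) set" where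
  "sigma_dual D E = {A \<in> Tcone. \<forall>\<phi>\<in>sigma D E. pairing A \<phi> = 0}"

end

theory Submission
  imports Defs
begin


lemma clin_0: "clinear_map f \<Longrightarrow> f 0 = 0"
  unfolding clinear_map_def by (metis add_cancel_right_right)

lemma clin_sum: "clinear_map f \<Longrightarrow> f (sum g S) = (\<Sum>x\<in>S. f (g x))"
  apply (induction S rule: infinite_finite_induct)
  by (auto simp: clin_0 clinear_map_def)

lemma double_delta: "(\<Sum>x\<in>UNIV. \<Sum>y\<in>UNIV. if (i::'a::finite) = x \<and> (j::'b::finite) = y then g x y else (0::'c::comm_monoid_add)) = g i j"
proof -
  have "(\<Sum>x\<in>UNIV. \<Sum>y\<in>UNIV. if i = x \<and> j = y then g x y else 0) = (\<Sum>x\<in>UNIV. if i = x then g x j else 0)"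
    by (rule sum.cong) (auto simp: if_if_eq_conj[symmetric] sum.delta sum.delta')
  then show ?thesis by (simp add: sum.delta sum.delta')
qed

lemma mat_expand: "(X::complex^'m^'m) = (\<Sum>i\<in>UNIV. \<Sum>j\<in>UNIV. cscale (X$i$j) (unitmat i j))"
  by (simp add: vec_eq_iff cscale_def unitmat_def if_distrib double_delta cong: if_cong)

lemma clin_expand: "clinear_map f \<Longrightarrow> f X = (\<Sum>i\<in>UNIV. \<Sum>j\<in>UNIV. cscale (X$i$j) (f (unitmat i j)))"
proof -
  assume a: "clinear_map f"
  have "f X = f (\<Sum>i\<in>UNIV. \<Sum>j\<in>UNIV. cscale (X$i$j) (unitmat i j))"
    by (rule arg_cong[where f=f], rule mat_expand)
  also have "\<dots> = (\<Sum>i\<in>UNIV. \<Sum>j\<in>UNIV. cscale (X$i$j) (f (unitmat i j)))"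
    using a by (simp add: clin_sum) (simp add: clinear_map_def)
  finally show ?thesis .
qed

lemma psd_outer: "psd (\<chi> i j. c i * cnj (c j) :: complex^'m^'m)"
  unfolding psd_def
proof (intro allI)
  fix x :: "complex^'m"
  define s where "s = (\<Sum>i\<in>UNIV. cnj (x $ i) * c i)"
  have e: "(\<Sum>i\<in>UNIV. cnj (x $ i) * ((\<chi> i j. c i * cnj (c j) :: complex^'m^'m) *v x) $ i)
     = s * cnj s"
    unfolding s_def
    apply (simp add: matrix_vector_mult_def sum_distrib_left sum_distrib_right mult_ac)
    by (rule sum.swap)
  have "s * cnj s = complex_of_real ((Re s)^2 + (Im s)^2)" by (rule complex_mult_cnj)
  then show "Im (\<Sum>i\<in>UNIV. cnj (x $ i) * ((\<chi> i j. c i * cnj (c j) :: complex^'m^'m) *v x) $ i) = 0 \<and>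
      0 \<le> Re (\<Sum>i\<in>UNIV. cnj (x $ i) * ((\<chi> i j. c i * cnj (c j) :: complex^'m^'m) *v x) $ i)"
    using e by simp
qed

lemma sum4_swap:
  fixes F :: "'a::finite \<Rightarrow> 'b::finite \<Rightarrow> 'c::finite \<Rightarrow> 'd::finite \<Rightarrow> 'e::comm_monoid_add"
  shows "(\<Sum>k\<in>UNIV. \<Sum>l\<in>UNIV. \<Sum>i\<in>UNIV. \<Sum>j\<in>UNIV. F k l i j)
       = (\<Sum>i\<in>UNIV. \<Sum>j\<in>UNIV. \<Sum>k\<in>UNIV. \<Sum>l\<in>UNIV. F k l i j)"
proof -
  have "(\<Sum>k\<in>UNIV. \<Sum>l\<in>UNIV. \<Sum>i\<in>UNIV. \<Sum>j\<in>UNIV. F k l i j)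
      = (\<Sum>k\<in>UNIV. \<Sum>i\<in>UNIV. \<Sum>l\<in>UNIV. \<Sum>j\<in>UNIV. F k l i j)"
    by (rule sum.cong[OF refl], rule sum.swap)
  also have "\<dots> = (\<Sum>i\<in>UNIV. \<Sum>k\<in>UNIV. \<Sum>l\<in>UNIV. \<Sum>j\<in>UNIV. F k l i j)"
    by (rule sum.swap)
  also have "\<dots> = (\<Sum>i\<in>UNIV. \<Sum>k\<in>UNIV. \<Sum>j\<in>UNIV. \<Sum>l\<in>UNIV. F k l i j)"
    by (rule sum.cong[OF refl], rule sum.cong[OF refl], rule sum.swap)
  also have "\<dots> = (\<Sum>i\<in>UNIV. \<Sum>j\<in>UNIV. \<Sum>k\<in>UNIV. \<Sum>l\<in>UNIV. F k l i j)"
    by (rule sum.cong[OF refl], rule sum.swap)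
  finally show ?thesis .
qed

lemma pairing_expand:
  "pairing A \<phi> = (\<Sum>i\<in>UNIV. \<Sum>j\<in>UNIV. \<Sum>k\<in>UNIV. \<Sum>l\<in>UNIV. A $ (i,k) $ (j,l) * \<phi> (unitmat i j) $ k $ l)"
  by (simp add: pairing_def trace_def matrix_matrix_mult_def transpose_def blk_def)

lemma pair_zz_nonneg:
  fixes z :: "complex^'n^'m" and \<phi> :: "complex^'m^'m \<Rightarrow> complex^'n^'n"
  assumes "\<phi> \<in> P1" and "\<And>i. z $ i = c i *s b"
  shows "Im (pairing (zz z) \<phi>) = 0 \<and> Re (pairing (zz z) \<phi>) \<ge> 0"
proof -
  have lin: "clinear_map \<phi>" and pos: "\<And>X. psd X \<Longrightarrow> psd (\<phi> X)" using assms(1) by (auto simp: P1_def)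
  define M where "M = \<phi> (\<chi> i j. c i * cnj (c j))"
  have pM: "psd M" unfolding M_def by (rule pos, rule psd_outer)
  define x where "x = (\<chi> k. cnj (b $ k) :: complex^'n)"
  have Mkl: "M $ k $ l = (\<Sum>i\<in>UNIV. \<Sum>j\<in>UNIV. c i * cnj (c j) * \<phi> (unitmat i j) $ k $ l)" for k l
    unfolding M_def by (subst clin_expand[OF lin]) (simp add: cscale_def)
  have "(\<Sum>k\<in>UNIV. cnj (x $ k) * (M *v x) $ k)
      = (\<Sum>k\<in>UNIV. \<Sum>l\<in>UNIV. \<Sum>i\<in>UNIV. \<Sum>j\<in>UNIV. (c i * b $ k) * cnj (c j * b $ l) * \<phi> (unitmat i j) $ k $ l)"
    by (simp add: x_def matrix_vector_mult_def Mkl sum_distrib_left sum_distrib_right mult_ac)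
  also have "\<dots> = (\<Sum>i\<in>UNIV. \<Sum>j\<in>UNIV. \<Sum>k\<in>UNIV. \<Sum>l\<in>UNIV. (c i * b $ k) * cnj (c j * b $ l) * \<phi> (unitmat i j) $ k $ l)"
    by (rule sum4_swap)
  also have "\<dots> = pairing (zz z) \<phi>"
    unfolding pairing_expand by (simp add: zz_def assms(2) vector_scalar_mult_def)
  finally show ?thesis using pM unfolding psd_def by metis
qed




lemma cscale_add: "cscale c (A + B) = cscale c A + cscale c B"
  by (simp add: vec_eq_iff cscale_def distrib_left)
lemma cscale_mult_left: "cscale c A ** B = cscale c (A ** B)"
  by (simp add: vec_eq_iff cscale_def matrix_matrix_mult_def sum_distrib_left mult_ac)
lemma cscale_mult_right: "A ** cscale c B = cscale c (A ** B)"
  by (simp add: vec_eq_iff cscale_def matrix_matrix_mult_def sum_distrib_left mult_ac)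
lemma mat_add_rdistrib: "(B + C) ** (A::complex^'c^'b) = B ** A + C ** A"
  by (simp add: vec_eq_iff matrix_matrix_mult_def distrib_right sum.distrib)
lemma transpose_add': "transpose (A + B) = transpose A + transpose (B::complex^'b^'a)"
  by (simp add: vec_eq_iff transpose_def)
lemma transpose_cscale: "transpose (cscale c A) = cscale c (transpose A)"
  by (simp add: vec_eq_iff transpose_def cscale_def)
lemma cscale_scaleR: "cscale c (r *\<^sub>R A) = r *\<^sub>R cscale c A"
  by (simp add: vec_eq_iff cscale_def scaleR_conv_of_real mult_ac)
lemma cscale_zero: "cscale c 0 = 0"
  by (simp add: vec_eq_iff cscale_def)
lemma cscale_sum: "cscale c (sum f S) = (\<Sum>x\<in>S. cscale c (f x))"
  by (induction S rule: infinite_finite_induct) (auto simp: cscale_add cscale_zero)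

lemma clin_phi_low: "clinear_map (phi_low Vs)"
  unfolding clinear_map_def phi_low_def
  by (induction Vs) (auto simp: matrix_add_ldistrib mat_add_rdistrib cscale_mult_left cscale_mult_right cscale_add,
      simp add: vec_eq_iff cscale_def)

lemma clin_phi_up: "clinear_map (phi_up Vs)"
  unfolding clinear_map_def phi_up_def
  by (induction Vs) (auto simp: transpose_add' transpose_cscale matrix_add_ldistrib mat_add_rdistrib cscale_mult_left cscale_mult_right cscale_add,
      simp add: vec_eq_iff cscale_def)

lemma clin_comb: "(\<And>i. i < k \<Longrightarrow> clinear_map (f i)) \<Longrightarrow> clinear_map (\<lambda>X. \<Sum>i<k. c i *\<^sub>R f i X)"
  unfolding clinear_map_def
  by (auto simp: scaleR_add_right sum.distrib cscale_sum cscale_scaleR)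

lemma clin_fcomb: "clinear_map f \<Longrightarrow> clinear_map g \<Longrightarrow> clinear_map (fcomb t f g)"
  unfolding clinear_map_def fcomb_def
  by (auto simp: scaleR_add_right cscale_add cscale_scaleR)

lemma clin_sigma: "\<phi> \<in> sigma D E \<Longrightarrow> clinear_map \<phi>"
  unfolding sigma_def fconv_def PhiD_def PhiE_def
  by (auto intro!: clin_comb) (metis clin_phi_low clin_phi_up)+

lemma sum_split_add: "(\<Sum>i<k1+(k2::nat). g i) = (\<Sum>i<k1. g i) + (\<Sum>i<k2. g (k1+i))"
  by (induction k2) (auto simp: add_ac)

lemma fconv_fcomb:
  assumes "a \<in> fconv S" "b \<in> fconv S" "0 \<le> u" "u \<le> 1"
  shows "fcomb u a b \<in> fconv S"
proof -
  obtain k1 :: nat and c1 :: "nat \<Rightarrow> real" and f1 where A: "\<forall>i<k1. c1 i \<ge> 0 \<and> f1 i \<in> S" "(\<Sum>i<k1. c1 i) = 1" "a = (\<lambda>X. \<Sum>i<k1. c1 i *\<^sub>R f1 i X)"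
    using assms(1) unfolding fconv_def mem_Collect_eq by blast
  obtain k2 :: nat and c2 :: "nat \<Rightarrow> real" and f2 where B: "\<forall>i<k2. c2 i \<ge> 0 \<and> f2 i \<in> S" "(\<Sum>i<k2. c2 i) = 1" "b = (\<lambda>X. \<Sum>i<k2. c2 i *\<^sub>R f2 i X)"
    using assms(2) unfolding fconv_def mem_Collect_eq by blast
  define c where "c (i::nat) = (if i < k1 then (1-u) * c1 i else u * c2 (i - k1))" for i
  define f where "f (i::nat) = (if i < k1 then f1 i else f2 (i - k1))" for i
  have "\<forall>i<k1+k2. c i \<ge> 0 \<and> f i \<in> S"
    using A(1) B(1) assms(3,4) by (auto simp: c_def f_def)
  moreover have "(\<Sum>i<k1+k2. c i) = 1"
    unfolding sum_split_add using A(2) B(2)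
    by (simp add: c_def sum_distrib_left[symmetric])
  moreover have "fcomb u a b = (\<lambda>X. \<Sum>i<k1+k2. c i *\<^sub>R f i X)"
    unfolding sum_split_add fcomb_def A(3) B(3)
    by (simp add: c_def f_def scaleR_sum_right)
  ultimately show ?thesis unfolding fconv_def mem_Collect_eq by (intro exI conjI)
qed

lemma cscaleR: "r *\<^sub>R (z::complex) = complex_of_real r * z"
  by (simp add: scaleR_conv_of_real)

lemma pairing_add: "pairing (A + B) \<phi> = pairing A \<phi> + pairing B \<phi>"
  unfolding pairing_expand by (simp add: distrib_right sum.distrib)
lemma pairing_scaleR: "pairing (r *\<^sub>R A) \<phi> = of_real r * pairing A \<phi>"
  unfolding pairing_expand by (simp add: cscaleR sum_distrib_left mult_ac)
lemma pairing_zero: "pairing 0 \<phi> = 0"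
  unfolding pairing_expand by simp
lemma pairing_sum: "pairing (sum g S) \<phi> = (\<Sum>x\<in>S. pairing (g x) \<phi>)"
  by (induction S rule: infinite_finite_induct) (auto simp: pairing_zero pairing_add)
lemma pairing_fcomb: "pairing A (fcomb t y x) = of_real (1-t) * pairing A y + of_real t * pairing A x"
  unfolding pairing_expand fcomb_def
  by (simp add: cscaleR distrib_left sum.distrib sum_distrib_left mult_ac)




lemma rank1_decomp:
  fixes z :: "complex^'n^'m"
  assumes "rank z \<le> 1"
  shows "\<exists>c b. \<forall>i. z $ i = c i *s b"
proof -
  obtain B where B: "B \<subseteq> rows z" "vec.independent B" "rows z \<subseteq> vec.span B" "card B = vec.dim (rows z)"
    using vec.basis_exists by blast
  have fin: "finite B" using B(2) vec.finiteI_independent by blast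
  have "card B \<le> 1" using B(4) assms by (simp add: row_rank_def_gen)
  then have "B = {} \<or> (\<exists>b. B = {b})" using fin
    by (metis card_0_eq card_1_singletonE le_eq_less_or_eq less_one)
  then obtain b where Bsub: "B \<subseteq> {b}" by blast
  have "\<forall>i. \<exists>c. z $ i = c *s b"
  proof
    fix i
    have "row i z \<in> rows z" by (auto simp: rows_def)
    then have "z $ i \<in> vec.span {b}" using B(3) vec.span_mono[OF Bsub]
      by (metis (no_types, lifting) row_def subsetD vec_lambda_eta)
    then show "\<exists>c. z $ i = c *s b" by (auto simp: vec.span_singleton)
  qed
  then show ?thesis by metis
qed

lemma V1_pair:
  fixes A :: "complex^('m::finite \<times> 'n::finite)^('m \<times> 'n)" and \<phi> :: "complex^'m^'m \<Rightarrow> complex^'n^'n"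
  assumes "A \<in> V1" "\<phi> \<in> P1"
  shows "Im (pairing A \<phi>) = 0 \<and> Re (pairing A \<phi>) \<ge> 0"
proof -
  obtain k :: nat and c :: "nat \<Rightarrow> real" and z :: "nat \<Rightarrow> complex^'n^'m"
    where H: "\<forall>i<k. c i \<ge> 0 \<and> rank (z i) \<le> 1" "A = (\<Sum>i<k. c i *\<^sub>R zz (z i))"
    using assms(1) unfolding V1_def by blast
  have eq: "pairing A \<phi> = (\<Sum>i<k. of_real (c i) * pairing (zz (z i)) \<phi>)"
    by (simp add: H(2) pairing_sum pairing_scaleR)
  have t: "Im (pairing (zz (z i)) \<phi>) = 0 \<and> Re (pairing (zz (z i)) \<phi>) \<ge> 0" if ik: "i < k" for i
  proof -
    obtain cc b where "\<forall>j. z i $ j = cc j *s b" using rank1_decomp[of "z i"] H(1) ik by blast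
    then show ?thesis using pair_zz_nonneg[OF assms(2)] by blast
  qed
  show ?thesis unfolding eq using t H(1)
    by (auto simp: Im_sum Re_sum intro!: sum_nonneg)
qed

lemma V1_diag:
  fixes A :: "complex^('m::finite \<times> 'n::finite)^('m \<times> 'n)"
  assumes "A \<in> V1" "\<forall>p. Re (A $ p $ p) \<le> 0"
  shows "A = 0"
proof -
  obtain k :: nat and c :: "nat \<Rightarrow> real" and z :: "nat \<Rightarrow> complex^'n^'m"
    where H: "\<forall>i<k. c i \<ge> 0 \<and> rank (z i) \<le> 1" "A = (\<Sum>i<k. c i *\<^sub>R zz (z i))"
    using assms(1) unfolding V1_def by blast
  define w where "w i p = z i $ fst p $ snd p" for i p
  have Apq: "A $ p $ q = (\<Sum>i<k. of_real (c i) * (w i p * cnj (w i q)))" for p q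
    by (simp add: H(2) zz_def w_def cscaleR)
  have Re_pp: "Re (A $ p $ p) = (\<Sum>i<k. c i * (cmod (w i p))^2)" for p
    by (simp add: Apq Re_sum complex_mult_cnj cmod_power2)
  have z0: "c i = 0 \<or> w i p = 0" if "i < k" for i p
  proof -
    have "(\<Sum>i<k. c i * (cmod (w i p))^2) = 0"
      using assms(2) Re_pp[of p] H(1)
      by (smt (verit, ccfv_SIG) sum_nonneg mult_nonneg_nonneg zero_le_power2 lessThan_iff)
    then have "\<forall>i\<in>{..<k}. c i * (cmod (w i p))^2 = 0"
      by (subst sum_nonneg_eq_0_iff[symmetric]) (use H(1) in auto)
    then show ?thesis using that by auto
  qed
  show ?thesis
    unfolding vec_eq_iff
  proof (intro allI)
    fix p q
    have "A $ p $ q = 0" unfolding Apq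
    proof (rule sum.neutral, intro ballI)
      fix i assume "i \<in> {..<k}"
      then have "c i = 0 \<or> w i p = 0" using z0 by auto
      then show "complex_of_real (c i) * (w i p * cnj (w i q)) = 0" by auto
    qed
    then show "A $ p $ q = 0 $ p $ q" by simp
  qed
qed

definition psi :: "'m \<Rightarrow> 'n \<Rightarrow> complex^'m^'m \<Rightarrow> complex^'n^'n" where
  "psi j0 l0 X = cscale (X $ j0 $ j0) (unitmat l0 l0)"

lemma psd_diag: "psd (X::complex^'k^'k) \<Longrightarrow> Im (X $ j $ j) = 0 \<and> Re (X $ j $ j) \<ge> 0"
proof -
  assume "psd X"
  then have h: "Im (\<Sum>i\<in>UNIV. cnj (axis j 1 $ i) * (X *v axis j 1) $ i) = 0 \<and>
      Re (\<Sum>i\<in>UNIV. cnj (axis j 1 $ i) * (X *v axis j 1) $ i) \<ge> 0" unfolding psd_def by blast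
  have mv: "(X *v axis j (1::complex)) $ i = X $ i $ j" for i
  proof -
    have "(X *v axis j (1::complex)) $ i = (\<Sum>k\<in>UNIV. if k = j then X $ i $ k else 0)"
      unfolding matrix_vector_mult_def axis_def vec_lambda_beta by (rule sum.cong) auto
    then show ?thesis by simp
  qed
  have "(\<Sum>i\<in>UNIV. cnj (axis j 1 $ i) * (X *v axis j (1::complex)) $ i) = (\<Sum>i\<in>UNIV. if i = j then X $ i $ j else 0)"
    unfolding mv by (rule sum.cong) (auto simp: axis_def)
  then have "(\<Sum>i\<in>UNIV. cnj (axis j 1 $ i) * (X *v axis j (1::complex)) $ i) = X $ j $ j"
    by simp
  then show ?thesis using h by simp
qed

lemma sum_ind1: "(\<Sum>k\<in>(UNIV::'a::finite set). (if k = a then c else 0) * f k) = (c::complex) * f a"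
proof -
  have "(\<Sum>k\<in>(UNIV::'a set). (if k = a then c else 0) * f k) = (\<Sum>k\<in>UNIV. if k = a then c * f k else 0)"
    by (rule sum.cong) auto
  then show ?thesis by simp
qed

lemma sum_ind2: "(\<Sum>k\<in>(UNIV::'a::finite set). f k * (if k = a then c else 0)) = f a * (c::complex)"
proof -
  have "(\<Sum>k\<in>(UNIV::'a set). f k * (if k = a then c else 0)) = (\<Sum>k\<in>UNIV. if k = a then f k * c else 0)"
    by (rule sum.cong) auto
  then show ?thesis by simp
qed

lemma psi_P1: "psi (j0::'m::finite) (l0::'n::finite) \<in> P1"
proof -
  have lin: "clinear_map (psi j0 l0)"
    unfolding clinear_map_def psi_def by (simp add: vec_eq_iff cscale_def algebra_simps)
  have "psd (psi j0 l0 X)" if pX: "psd X" for X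
  proof -
    have d: "Im (X $ j0 $ j0) = 0 \<and> Re (X $ j0 $ j0) \<ge> 0" using psd_diag[OF pX] .
    define r where "r = Re (X $ j0 $ j0)"
    have r: "X $ j0 $ j0 = complex_of_real r" "r \<ge> 0" using d by (auto simp: r_def complex_eq_iff)
    show ?thesis unfolding psd_def
    proof
      fix x :: "complex^'n"
      have pv: "(psi j0 l0 X *v x) $ i = (if i = l0 then complex_of_real r * x $ l0 else 0)" for i
      proof -
        have "(psi j0 l0 X *v x) $ i = (\<Sum>k\<in>UNIV. (if k = l0 then (if i = l0 then complex_of_real r else 0) else 0) * x $ k)"
          unfolding matrix_vector_mult_def psi_def cscale_def unitmat_def r(1) vec_lambda_beta
          by (rule sum.cong) auto
        then show ?thesis by (simp add: sum_ind1)
      qed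
      have "(\<Sum>i\<in>UNIV. cnj (x $ i) * (psi j0 l0 X *v x) $ i) = complex_of_real r * (x $ l0 * cnj (x $ l0))"
        unfolding pv sum_ind2 by (simp add: mult_ac)
      then show "Im (\<Sum>i\<in>UNIV. cnj (x $ i) * (psi j0 l0 X *v x) $ i) = 0 \<and>
          0 \<le> Re (\<Sum>i\<in>UNIV. cnj (x $ i) * (psi j0 l0 X *v x) $ i)"
        using r(2) by (simp add: complex_mult_cnj)
    qed
  qed
  then show ?thesis using lin by (simp add: P1_def)
qed

lemma sum_if_const: "(\<Sum>x\<in>S. if C then f x else 0) = (if C then (\<Sum>x\<in>S. f x) else 0)"
  by auto

lemma pairing_psi: "pairing A (psi j0 l0) = A $ (j0,l0) $ (j0,l0)"
proof -
  have F: "A $ (i,k) $ (j,l) * psi j0 l0 (unitmat i j) $ k $ l = (if j0 = i \<and> j0 = j then (if l0 = k \<and> l0 = l then A $ (i,k) $ (j,l) else 0) else 0)" for i j k l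
    by (auto simp: psi_def cscale_def unitmat_def)
  show ?thesis unfolding pairing_expand F by (simp add: sum_if_const double_delta)
qed




definition Lmap :: "(complex^'m::finite^'m \<Rightarrow> complex^'n::finite^'n) \<Rightarrow> (complex^'n^'n)^('m \<times> 'm)" where
  "Lmap f = (\<chi> p. f (unitmat (fst p) (snd p)))"

lemma Lmap_fcomb: "Lmap (fcomb t y x) = (1 - t) *\<^sub>R Lmap y + t *\<^sub>R Lmap x"
  by (simp add: vec_eq_iff fcomb_def Lmap_def)

lemma Lmap_inj:
  assumes "clinear_map f" "clinear_map g" "Lmap f = Lmap g"
  shows "f = g"
proof
  fix X
  have e: "f (unitmat i j) = g (unitmat i j)" for i j
  proof -
    have "Lmap f $ (i,j) = Lmap g $ (i,j)" using assms(3) by simp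
    then show ?thesis by (simp add: Lmap_def)
  qed
  have "f X = (\<Sum>i\<in>UNIV. \<Sum>j\<in>UNIV. cscale (X$i$j) (f (unitmat i j)))" by (rule clin_expand[OF assms(1)])
  also have "\<dots> = (\<Sum>i\<in>UNIV. \<Sum>j\<in>UNIV. cscale (X$i$j) (g (unitmat i j)))" by (simp only: e)
  also have "\<dots> = g X" by (rule clin_expand[OF assms(2), symmetric])
  finally show "f X = g X" .
qed

lemma sigma_nonempty:
  assumes "csubspace D"
  shows "sigma D E \<noteq> {}"
proof -
  have "cspan (set []) \<subseteq> D" using assms unfolding cspan_def by (intro Inter_lower) simp
  then have h: "phi_low [] \<in> PhiD D" unfolding PhiD_def by blast
  have "(\<lambda>X. \<Sum>i<(1::nat). (1::real) *\<^sub>R phi_low [] X) \<in> sigma D E"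
    unfolding sigma_def fconv_def mem_Collect_eq
    by (rule exI[of _ "1::nat"], rule exI[of _ "\<lambda>_. 1"], rule exI[of _ "\<lambda>_. phi_low []"]) (use h in simp)
  then show ?thesis by blast
qed

lemma exists_interior:
  fixes D E :: "(complex^'n::finite^'m::finite) set"
  assumes "csubspace D"
  shows "\<exists>\<phi>. interior_pt (sigma D E) \<phi>"
proof -
  define S where "S = Lmap ` sigma D E"
  have cvx: "convex S"
    unfolding convex_def S_def
  proof (intro ballI allI impI)
    fix x y u v
    assume x: "x \<in> Lmap ` sigma D E" and y: "y \<in> Lmap ` sigma D E" and uv: "0 \<le> (u::real)" "0 \<le> v" "u + v = 1"
    obtain a b where a: "a \<in> sigma D E" "x = Lmap a" and b: "b \<in> sigma D E" "y = Lmap b" using x y by blast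
    have "fcomb v a b \<in> sigma D E" using a(1) b(1) uv unfolding sigma_def by (intro fconv_fcomb) auto
    moreover have "u *\<^sub>R x + v *\<^sub>R y = Lmap (fcomb v a b)"
      using uv by (simp add: Lmap_fcomb a b)
    ultimately show "u *\<^sub>R x + v *\<^sub>R y \<in> Lmap ` sigma D E" by blast
  qed
  have ne: "S \<noteq> {}" using sigma_nonempty[OF assms] unfolding S_def by blast
  obtain s where s: "s \<in> rel_interior S" using rel_interior_eq_empty[OF cvx] ne by blast
  then have "s \<in> S" using rel_interior_subset by blast
  then obtain \<phi> where \<phi>: "\<phi> \<in> sigma D E" "s = Lmap \<phi>" unfolding S_def by blast
  have ri: "\<forall>x\<in>S. \<exists>e. e > 1 \<and> (1 - e) *\<^sub>R x + e *\<^sub>R s \<in> S"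
    using convex_rel_interior_iff[OF cvx ne] s by blast
  have "interior_pt (sigma D E) \<phi>"
    unfolding interior_pt_def
  proof (intro conjI ballI)
    show "\<phi> \<in> sigma D E" by (rule \<phi>(1))
    fix y assume y: "y \<in> sigma D E"
    then have "Lmap y \<in> S" unfolding S_def by blast
    then obtain e where e: "e > 1" "(1 - e) *\<^sub>R Lmap y + e *\<^sub>R s \<in> S" using ri by blast
    then obtain ch where ch: "ch \<in> sigma D E" "(1 - e) *\<^sub>R Lmap y + e *\<^sub>R s = Lmap ch"
      unfolding S_def by blast
    have "Lmap (fcomb e y \<phi>) = Lmap ch" using ch(2) \<phi>(2) by (simp add: Lmap_fcomb)
    then have "fcomb e y \<phi> = ch"
      by (rule Lmap_inj[OF clin_fcomb[OF clin_sigma[OF y] clin_sigma[OF \<phi>(1)]] clin_sigma[OF ch(1)]])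
    then show "\<exists>t>1. fcomb t y \<phi> \<in> sigma D E" using e(1) ch(1) by blast
  qed
  then show ?thesis by blast
qed

theorem theorem3p1:
  fixes D E :: "(complex^'n^'m) set"
  assumes "csubspace D" and "csubspace E"
    and "proper_fface_of (sigma D E) (Dcone :: (complex^'m^'m \<Rightarrow> complex^'n^'n) set)"
    and "\<forall>\<phi>. interior_pt (sigma D E) \<phi> \<longrightarrow> interior_pt P1 \<phi>"
  shows "\<forall>A \<in> sigma_dual D E. A \<noteq> 0 \<longrightarrow> A \<in> Tcone - V1"
proof (intro ballI impI)
  fix A assume A: "A \<in> sigma_dual D E" and A0: "A \<noteq> 0"
  have AT: "A \<in> Tcone" and Aperp: "\<forall>\<phi>\<in>sigma D E. pairing A \<phi> = 0" using A by (auto simp: sigma_dual_def)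
  obtain \<phi> where \<phi>: "interior_pt (sigma D E) \<phi>" using exists_interior[OF assms(1)] by blast
  have \<phi>P: "interior_pt P1 \<phi>" using assms(4) \<phi> by blast
  have p0: "pairing A \<phi> = 0" using Aperp \<phi> by (auto simp: interior_pt_def)
  have "A \<notin> V1"
  proof
    assume AV: "A \<in> V1"
    have "Re (A $ p $ p) \<le> 0" for p
    proof -
      obtain j0 l0 where p: "p = (j0, l0)" by (cases p)
      obtain t where t: "t > 1" "fcomb t (psi j0 l0) \<phi> \<in> P1"
        using \<phi>P psi_P1[of j0 l0] unfolding interior_pt_def by blast
      have "Re (pairing A (fcomb t (psi j0 l0) \<phi>)) \<ge> 0" using V1_pair[OF AV t(2)] by blast
      then have "(1 - t) * Re (A $ p $ p) \<ge> 0"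
        by (simp add: pairing_fcomb pairing_psi p0 p)
      then show ?thesis using t(1) by (simp add: mult_le_0_iff zero_le_mult_iff)
    qed
    then have "A = 0" using V1_diag[OF AV] by blast
    then show False using A0 by blast
  qed
  then show "A \<in> Tcone - V1" using AT by blast
qed


end
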